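(* Let $n\in\mathbf{N}$ and $A\subset[n]$ have property P. Let $Z$ and $Z^{1(2)}_{(\frac29,\frac13]}$ be as defined in the context. Then for each $i\in\{1,3\}$, $$\left|Z^{1(2)}_{(\frac29,\frac13]}\right|+\left|A\cap\left(\tfrac{2n}{3},n\right]\cap(i+4\mathbf{Z})\right|\leqslant\frac{n}{12}+3.$$
   Context: A set $A\subset\mathbf{N}$ has property P if there are no $x,y,z\in A$ (not necessarily distinct $x,y$) with $z<x$, $z<y$ and $z\mid x+y$. Intervals denote sets of integers. For $a\in A\cap[1,\frac n2]$ let $m_a\geqslant0$ be the unique integer with $3^{m_a}a\in(\frac n6,\frac n2]$. Define $Z=\{3^{m_a}a: a\in A\cap[1,\frac n2],\ 3^{m_a}a\in(\frac{2n}{9},\frac n2]\}\cup\{2\cdot3^{m_a}a: a\in A\cap[1,\frac n2],\ 3^{m_a}a\in(\frac n6,\frac{2n}{9}]\}\subset(\frac{2n}{9},\frac n2]$, and $Z^{1(2)}_{(\frac29,\frac13]}=Z\cap(\frac{2n}{9},\frac n3]\cap(1+2\mathbf{Z})$. *)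

theory Defs
  imports Complex_Main
begin

definition propP :: "nat set \<Rightarrow> bool" where
  "propP A \<longleftrightarrow> \<not> (\<exists>x\<in>A. \<exists>y\<in>A. \<exists>z\<in>A. z < x \<and> z < y \<and> z dvd (x + y))"

definition mexp :: "nat \<Rightarrow> nat \<Rightarrow> nat" where
  "mexp n a = (THE m. n < 6 * (3 ^ m * a) \<and> 2 * (3 ^ m * a) \<le> n)"

definition Zset :: "nat \<Rightarrow> nat set \<Rightarrow> nat set" where
  "Zset n A =
     {3 ^ mexp n a * a | a. a \<in> A \<and> 1 \<le> a \<and> 2 * a \<le> n \<and> 2 * n < 9 * (3 ^ mexp n a * a)}
   \<union> {2 * (3 ^ mexp n a * a) | a. a \<in> A \<and> 1 \<le> a \<and> 2 * a \<le> n \<and>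
        n < 6 * (3 ^ mexp n a * a) \<and> 9 * (3 ^ mexp n a * a) \<le> 2 * n}"

definition Z12 :: "nat \<Rightarrow> nat set \<Rightarrow> nat set" where
  "Z12 n A = {z \<in> Zset n A. 2 * n < 9 * z \<and> 3 * z \<le> n \<and> odd z}"

end

theory Submission
  imports Defs
begin

lemma ap_card:
  fixes X :: "nat set" and d r :: nat and lo hi :: real
  assumes fin: "finite X" and d: "d > 0" and md: "\<forall>x\<in>X. x mod d = r"
    and rng: "\<forall>x\<in>X. lo < real x \<and> real x \<le> hi" and lohi: "lo \<le> hi"
  shows "real (card X) \<le> (hi - lo) / real d + 1"
proof (cases "X = {}")
  case True
  have "0 \<le> (hi - lo) / real d" using lohi d by simp
  then show ?thesis using True by simp
next
  case False
  define m where "m = Min X"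
  define M where "M = Max X"
  have mX: "m \<in> X" "M \<in> X" using False fin m_def M_def by auto
  have mle: "\<forall>x\<in>X. m \<le> x \<and> x \<le> M" using fin m_def M_def by auto
  have sub: "X \<subseteq> (\<lambda>k. m + d*k) ` {0..(M-m) div d}"
  proof
    fix x assume x: "x \<in> X"
    have "x mod d = m mod d" using md x mX by auto
    hence "d dvd x - m" using mle x by (simp add: mod_eq_dvd_iff_nat)
    then obtain k where k: "x - m = d*k" by blast
    have "d*k \<le> M - m" using k mle x by auto
    hence "(d*k) div d \<le> (M-m) div d" by (rule div_le_mono)
    hence "k \<le> (M-m) div d" using d by simp
    moreover have "x = m + d*k" using k mle x by auto
    ultimately show "x \<in> (\<lambda>k. m + d*k) ` {0..(M-m) div d}" by auto
  qed
  have "card X \<le> card ((\<lambda>k. m + d*k) ` {0..(M-m) div d})"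
    by (rule card_mono[OF _ sub]) simp
  also have "\<dots> \<le> card {0..(M-m) div d}" by (rule card_image_le) simp
  finally have c: "card X \<le> (M-m) div d + 1" by simp
  have "real ((M-m) div d) \<le> real (M-m) / real d" by (rule of_nat_div_le_of_nat)
  moreover have "real (M-m) \<le> hi - lo"
  proof -
    have "lo < real m" "real M \<le> hi" using rng mX by auto
    moreover have "m \<le> M" using mle mX by auto
    ultimately show ?thesis by (simp add: of_nat_diff)
  qed
  moreover have "real (M-m) / real d \<le> (hi - lo) / real d"
    using calculation(2) d by (simp add: divide_right_mono)
  ultimately show ?thesis using c by linarith
qed

lemma sumset_card:
  fixes A B :: "nat set"
  assumes fA: "finite A" and fB: "finite B" and nA: "A \<noteq> {}" and nB: "B \<noteq> {}"
    and dv: "\<forall>a\<in>A. \<forall>b\<in>B. 6 dvd a + b"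
  shows "card A + card B \<le> card ((\<lambda>p. (fst p + snd p) div 6) ` (A \<times> B)) + 1"
proof -
  define mB where "mB = Min B"
  define MA where "MA = Max A"
  have mB: "mB \<in> B" "\<forall>b\<in>B. mB \<le> b" using fB nB mB_def by auto
  have MA: "MA \<in> A" "\<forall>a\<in>A. a \<le> MA" using fA nA MA_def by auto
  define U where "U = (\<lambda>a. (a + mB) div 6) ` A"
  define V where "V = (\<lambda>b. (MA + b) div 6) ` B"
  have injU: "inj_on (\<lambda>a. (a + mB) div 6) A"
  proof (rule inj_onI)
    fix a a' assume a: "a \<in> A" "a' \<in> A" and e: "(a + mB) div 6 = (a' + mB) div 6"
    have "6 dvd a + mB" "6 dvd a' + mB" using dv a mB by auto
    then have "a + mB = a' + mB" using e by (metis dvd_div_mult_self)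
    then show "a = a'" by simp
  qed
  have injV: "inj_on (\<lambda>b. (MA + b) div 6) B"
  proof (rule inj_onI)
    fix b b' assume b: "b \<in> B" "b' \<in> B" and e: "(MA + b) div 6 = (MA + b') div 6"
    have "6 dvd MA + b" "6 dvd MA + b'" using dv b MA by auto
    then have "MA + b = MA + b'" using e by (metis dvd_div_mult_self)
    then show "b = b'" by simp
  qed
  have cU: "card U = card A" unfolding U_def using injU by (simp add: card_image)
  have cV: "card V = card B" unfolding V_def using injV by (simp add: card_image)
  have UV: "U \<inter> V \<subseteq> {(MA + mB) div 6}"
  proof
    fix u assume u: "u \<in> U \<inter> V"
    then obtain a b where a: "a \<in> A" "u = (a + mB) div 6" and b: "b \<in> B" "u = (MA + b) div 6"
      unfolding U_def V_def by auto
    have "u \<le> (MA + mB) div 6" using a MA by (simp add: div_le_mono)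
    moreover have "(MA + mB) div 6 \<le> u" using b mB by (simp add: div_le_mono)
    ultimately show "u \<in> {(MA + mB) div 6}" by simp
  qed
  have fU: "finite U" "finite V" using fA fB U_def V_def by auto
  have "card (U \<inter> V) \<le> 1" using card_mono[OF _ UV] by simp
  moreover have "card (U \<union> V) + card (U \<inter> V) = card U + card V"
    using card_Un_Int[OF fU] by simp
  moreover have "U \<union> V \<subseteq> (\<lambda>p. (fst p + snd p) div 6) ` (A \<times> B)"
    unfolding U_def V_def using mB MA by force
  hence "card (U \<union> V) \<le> card ((\<lambda>p. (fst p + snd p) div 6) ` (A \<times> B))"
    using fA fB by (intro card_mono) auto
  ultimately show ?thesis using cU cV by linarith
qed

theorem mainTheorem15:
  fixes n i :: nat and A :: "nat set"
  assumes "A \<subseteq> {1..n}" and "propP A" and "i \<in> {1, 3}"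
  shows "real (card (Z12 n A)) + real (card {x \<in> A. 2 * n < 3 * x \<and> x \<le> n \<and> x mod 4 = i})
           \<le> real n / 12 + 3"
proof -
  define S where "S = {x \<in> A. 2 * n < 3 * x \<and> x \<le> n \<and> x mod 4 = i}"
  define T where "T = Z12 n A"
  define Od where "Od = {t::nat. 2 * n < 9 * t \<and> 3 * t \<le> n \<and> odd t}"
  have fO: "finite Od" unfolding Od_def by (rule finite_subset[of _ "{..n}"]) auto
  have fS: "finite S" unfolding S_def by (rule finite_subset[of _ "{..n}"]) auto
  have TO: "T \<subseteq> Od" unfolding T_def Od_def Z12_def by auto
  have fT: "finite T" using TO fO finite_subset by blast
  have F: "\<forall>t\<in>T. \<forall>x\<in>S. \<forall>y\<in>S. x + y \<noteq> 6 * t"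
  proof (intro ballI notI)
    fix t x y assume t: "t \<in> T" and x: "x \<in> S" and y: "y \<in> S" and e: "x + y = 6 * t"
    have tZ: "t \<in> Zset n A" "odd t" "3 * t \<le> n" using t unfolding T_def Z12_def by auto
    obtain a k where a: "a \<in> A" "1 \<le> a" "t = 3 ^ k * a"
    proof -
      from tZ(1) consider (p1) "\<exists>a. t = 3 ^ mexp n a * a \<and> a \<in> A \<and> 1 \<le> a"
        | (p2) "\<exists>a. t = 2 * (3 ^ mexp n a * a)"
        unfolding Zset_def by blast
      then show ?thesis
      proof cases
        case p1 then show ?thesis using that by blast
      next
        case p2 then have "even t" by auto
        then show ?thesis using tZ(2) by simp
      qed
    qed
    have "a \<le> t" using a by simp
    have "a dvd t" using a by simp
    hence ad: "a dvd x + y" using e by simp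
    have "a < x" "a < y" using x y tZ \<open>a \<le> t\<close> unfolding S_def by auto
    then show False using assms(2) a x y ad unfolding propP_def S_def by blast
  qed
  define D where "D = {t \<in> Od. \<exists>x\<in>S. \<exists>y\<in>S. x + y = 6 * t}"
  have DT: "D \<inter> T = {}" using F unfolding D_def by auto
  have DO: "D \<subseteq> Od" unfolding D_def by auto
  have fD: "finite D" using DO fO finite_subset by blast
  have "card T + card D = card (T \<union> D)" using DT fT fD by (simp add: card_Un_disjoint inf_commute)
  also have "\<dots> \<le> card Od" using TO DO fO by (intro card_mono) auto
  finally have TD: "card T + card D \<le> card Od" .
  have cO: "real (card Od) \<le> real n / 18 + 1"
  proof -
    have "real (card Od) \<le> (real n / 3 - 2 * real n / 9) / real (2::nat) + 1"
    proof (rule ap_card[OF fO, where r=1])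
      show "\<forall>x\<in>Od. x mod 2 = 1" unfolding Od_def by (auto simp: odd_iff_mod_2_eq_one)
      show "\<forall>x\<in>Od. 2 * real n / 9 < real x \<and> real x \<le> real n / 3"
      proof
        fix x assume "x \<in> Od"
        then have "2 * n < 9 * x" "3 * x \<le> n" unfolding Od_def by auto
        then have "2 * real n < 9 * real x" "3 * real x \<le> real n" by linarith+
        then show "2 * real n / 9 < real x \<and> real x \<le> real n / 3" by linarith
      qed
      show "2 * real n / 9 \<le> real n / 3" by simp
      show "0 < (2::nat)" by simp
    qed
    then show ?thesis by simp
  qed
  have pair: "card X + card Y \<le> card D + 1"
    if X: "X \<subseteq> S" "X \<noteq> {}" and Y: "Y \<subseteq> S" "Y \<noteq> {}"
      and m: "\<forall>x\<in>X. \<forall>y\<in>Y. (x + y) mod 12 = 6" for X Y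
  proof -
    have fX: "finite X" "finite Y" using X Y fS finite_subset by auto
    have dv: "\<forall>a\<in>X. \<forall>b\<in>Y. 6 dvd a + b"
    proof (intro ballI)
      fix a b assume "a \<in> X" "b \<in> Y"
      then have "(a + b) mod 12 = 6" using m by auto
      then have "a + b = 12 * ((a + b) div 12) + 6" using div_mult_mod_eq[of "a+b" 12] by linarith
      then have "a + b = 6 * (2 * ((a + b) div 12) + 1)" by simp
      then show "6 dvd a + b" by (metis dvd_triv_left)
    qed
    have "(\<lambda>p. (fst p + snd p) div 6) ` (X \<times> Y) \<subseteq> D"
    proof
      fix u assume "u \<in> (\<lambda>p. (fst p + snd p) div 6) ` (X \<times> Y)"
      then obtain x y where xy: "x \<in> X" "y \<in> Y" "u = (x + y) div 6" by auto
      have mm: "(x + y) mod 12 = 6" using m xy by auto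
      define q where "q = (x + y) div 12"
      have xq: "x + y = 12 * q + 6" using div_mult_mod_eq[of "x+y" 12] mm q_def by linarith
      have uq: "u = 2 * q + 1" using xy(3) xq by simp
      have e: "x + y = 6 * u" using xq uq by simp
      have ou: "odd u" using uq by simp
      have xs: "x \<in> S" "y \<in> S" using xy X Y by auto
      then have "2 * n < 3 * x" "2 * n < 3 * y" "x \<le> n" "y \<le> n" unfolding S_def by auto
      then have "u \<in> Od" unfolding Od_def using e ou by auto
      then show "u \<in> D" unfolding D_def using xs e by auto
    qed
    then have "card ((\<lambda>p. (fst p + snd p) div 6) ` (X \<times> Y)) \<le> card D"
      using fD by (rule card_mono[rotated])
    then show ?thesis using sumset_card[OF fX X(2) Y(2) dv] by linarith
  qed
  obtain r0 r1 r2 :: nat where r: "(r0 + r0) mod 12 = 6" "(r1 + r2) mod 12 = 6"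
      "\<forall>x::nat. x mod 4 = i \<longrightarrow> x mod 12 = r0 \<or> x mod 12 = r1 \<or> x mod 12 = r2"
      "r0 \<noteq> r1" "r0 \<noteq> r2" "r1 \<noteq> r2"
  proof -
    from assms(3) consider "i = 1" | "i = 3" by auto
    then show ?thesis
    proof cases
      case 1
      show ?thesis by (rule that[of 9 1 5]) (auto simp: 1, presburger)
    next
      case 2
      show ?thesis by (rule that[of 3 7 11]) (auto simp: 2, presburger)
    qed
  qed
  define S0 where "S0 = {x \<in> S. x mod 12 = r0}"
  define S1 where "S1 = {x \<in> S. x mod 12 = r1}"
  define S2 where "S2 = {x \<in> S. x mod 12 = r2}"
  have Sun: "S = S0 \<union> S1 \<union> S2" using r(3) unfolding S0_def S1_def S2_def S_def by auto
  have cS: "card S = card S0 + card S1 + card S2"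
  proof -
    have f: "finite S0" "finite S1" "finite S2" using fS unfolding S0_def S1_def S2_def by auto
    have "card (S0 \<union> S1 \<union> S2) = card (S0 \<union> S1) + card S2"
      using f r unfolding S0_def S1_def S2_def by (intro card_Un_disjoint) auto
    also have "card (S0 \<union> S1) = card S0 + card S1"
      using f r unfolding S0_def S1_def by (intro card_Un_disjoint) auto
    finally show ?thesis using Sun by simp
  qed
  have cls: "real (card {x \<in> S. x mod 12 = rr}) \<le> real n / 36 + 1" for rr
  proof -
    have "real (card {x \<in> S. x mod 12 = rr}) \<le> (real n - 2 * real n / 3) / real (12::nat) + 1"
    proof (rule ap_card[where r=rr])
      show "finite {x \<in> S. x mod 12 = rr}" using fS by simp
      show "\<forall>x\<in>{x \<in> S. x mod 12 = rr}. x mod 12 = rr" by simp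
      show "\<forall>x\<in>{x \<in> S. x mod 12 = rr}. 2 * real n / 3 < real x \<and> real x \<le> real n"
      proof
        fix x assume "x \<in> {x \<in> S. x mod 12 = rr}"
        then have "2 * n < 3 * x" "x \<le> n" unfolding S_def by auto
        then have "2 * real n < 3 * real x" "real x \<le> real n" by linarith+
        then show "2 * real n / 3 < real x \<and> real x \<le> real n" by linarith
      qed
      show "2 * real n / 3 \<le> real n" by simp
      show "0 < (12::nat)" by simp
    qed
    then show ?thesis by simp
  qed
  have c0: "real (card S0) \<le> real n / 36 + 1" using cls S0_def by simp
  have c1: "real (card S1) \<le> real n / 36 + 1" using cls S1_def by simp
  have c2: "real (card S2) \<le> real n / 36 + 1" using cls S2_def by simp
  have sub0: "S0 \<subseteq> S" "S1 \<subseteq> S" "S2 \<subseteq> S" using Sun by auto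
  have m00: "\<forall>x\<in>S0. \<forall>y\<in>S0. (x + y) mod 12 = 6" using r(1) unfolding S0_def
    by (metis (mono_tags, lifting) mem_Collect_eq mod_add_eq)
  have m12: "\<forall>x\<in>S1. \<forall>y\<in>S2. (x + y) mod 12 = 6" using r(2) unfolding S1_def S2_def
    by (metis (mono_tags, lifting) mem_Collect_eq mod_add_eq)
  have main: "real (card S) + real (card T) \<le> real n / 12 + 3"
  proof (cases "S1 \<noteq> {} \<and> S2 \<noteq> {}")
    case True
    have "card S1 + card S2 \<le> card D + 1" using pair[OF sub0(2) _ sub0(3) _ m12] True by blast
    then show ?thesis using cS TD cO c0 by simp
  next
    case False
    then have s12: "real (card S1 + card S2) \<le> real n / 36 + 1" using c1 c2 by auto
    show ?thesis
    proof (cases "S0 = {}")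
      case True
      then show ?thesis using cS TD cO s12 by simp
    next
      case False
      have "card S0 + card S0 \<le> card D + 1" using pair[OF sub0(1) False sub0(1) False m00] .
      then show ?thesis using cS TD cO s12 by simp
    qed
  qed
  then show ?thesis unfolding S_def T_def by simp
qed

end
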